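(* If $M\to_{\beta\mu}N$ and $\Gamma\vdash N:\delta\mid\Delta$ is derivable in the intersection type assignment system, then $\Gamma\vdash M:\delta\mid\Delta$ is derivable.
   Context: $\lambda\mu$ terms and commands: $M::=x\mid\lambda x.M\mid MN\mid\mu\alpha.\mathsf C$ and $\mathsf C::=[\alpha]M$. Structural substitution $T[\alpha\Leftarrow L]$ replaces, recursively, every subterm $[\alpha]N$ by $[\alpha](N[\alpha\Leftarrow L])L$. $\to_{\beta\mu}$ is the compatible closure of: - $(\lambda x.M)N\to M[N/x]$; - $(\mu\alpha.\mathsf C)N\to\mu\alpha.\mathsf C[\alpha\Leftarrow N]$; - $[\alpha]\mu\beta.\mathsf C\to\mathsf C[\alpha/\beta]$. Types (for a fixed $\omega$-algebraic lattice $R$): - $\Lambda_R$: $\rho::=\psi_a\mid\omega\mid\rho\wedge\rho$; - $\Lambda_D$: $\delta::=\rho\mid\kappa\to\rho\mid\omega\mid\delta\wedge\delta$; - $\Lambda_C$: $\kappa::=\delta\times\kappa\mid\omega\mid\kappa\wedge\kappa$. The relations $\le_R,\le_D,\le_C$ are the least reflexive, transitive relations with $\sigma\wedge\tau\le\sigma,\tau$, $\sigma\le\omega$, $\rho\le\sigma,\tau\Rightarrow\rho\le\sigma\wedge\tau$, and additionally: - $\psi_\bot\sim\omega$ and $\psi_{a\sqcup b}\sim\psi_a\wedge\psi_b$; - $\le_R\subseteq\le_D$; - $\omega\le_D\omega\to\omega$; - $\psi_a\le_D\omega\to\psi_a\le_D\psi_a$; - $\omega\le_C\omega\times\omega$;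 - $(\kappa\to\rho_1)\wedge(\kappa\to\rho_2)\le_D\kappa\to(\rho_1\wedge\rho_2)$; - $(\delta_1\times\kappa_1)\wedge(\delta_2\times\kappa_2)\le_C(\delta_1\wedge\delta_2)\times(\kappa_1\wedge\kappa_2)$; - $\to$ is contravariant in $\Lambda_C$ and covariant in $\Lambda_R$; - $\times$ is covariant in both arguments. Type assignment. Bases $\Gamma$ are finite maps from variables to $\Lambda_D$, and contexts $\Delta$ are finite maps from names to $\Lambda_C$. $\Gamma(x)$ and $\Delta(\alpha)$ are $\omega$ outside the domain. The rules are: - (Ax) $\Gamma,x{:}\delta\vdash x:\delta\mid\Delta$. - (Abs) From $\Gamma\vdash M:\kappa\to\rho\mid\Delta$, $\Gamma(x)=\delta$, infer $\Gamma\setminus x\vdash\lambda x.M:(\delta\times\kappa)\to\rho\mid\Delta$. - (App) From $\Gamma\vdash M:(\delta\times\kappa)\to\rho\mid\Delta$ and $\Gamma\vdash N:\delta\mid\Delta$, infer $\Gamma\vdash MN:\kappa\to\rho\mid\Delta$. - (Cmd) From $\Gamma\vdash M:\delta\mid\Delta$, $\Delta(\alpha)=\kappa$, infer $\Gamma\vdash[\alpha]M:\delta\times\kappa\mid\Delta$. - ($\mu$) From $\Gamma\vdash\mathsf C:(\kappa'\to\rho)\times\kappa'\mid\Delta$, $\Delta(\alpha)=\kappa$, infer $\Gamma\vdash\mu\alpha.\mathsf C:\kappa\to\rho\mid\Delta\setminus\alpha$. - ($\wedge$), ($\omega$) and ($\le$). *)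

theory Defs
  imports Main "HOL-Library.Countable_Set"
begin

definition directed_set :: "'a::complete_lattice set \<Rightarrow> bool" where
  "directed_set D \<longleftrightarrow> D \<noteq> {} \<and> (\<forall>x\<in>D. \<forall>y\<in>D. \<exists>z\<in>D. x \<le> z \<and> y \<le> z)"

definition compact_el :: "'a::complete_lattice \<Rightarrow> bool" where
  "compact_el a \<longleftrightarrow> (\<forall>D. directed_set D \<and> a \<le> Sup D \<longrightarrow> (\<exists>d\<in>D. a \<le> d))"

definition omega_algebraic :: "'a::complete_lattice itself \<Rightarrow> bool" where
  "omega_algebraic (_ :: 'a itself) \<longleftrightarrow>
     (\<forall>x::'a. x = Sup {c. compact_el c \<and> c \<le> x}) \<and> countable {c::'a. compact_el c}"

section \<open>lambda-mu terms (de Bruijn indices, separately for variables and names)\<close>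

datatype trm = Var nat | Lam trm | App trm trm | Mu cmd
and cmd = Cmd nat trm

primrec liftv :: "nat \<Rightarrow> trm \<Rightarrow> trm" and liftv_c :: "nat \<Rightarrow> cmd \<Rightarrow> cmd" where
  "liftv k (Var i) = (if i < k then Var i else Var (Suc i))"
| "liftv k (Lam M) = Lam (liftv (Suc k) M)"
| "liftv k (App M N) = App (liftv k M) (liftv k N)"
| "liftv k (Mu C) = Mu (liftv_c k C)"
| "liftv_c k (Cmd a M) = Cmd a (liftv k M)"

primrec liftn :: "nat \<Rightarrow> trm \<Rightarrow> trm" and liftn_c :: "nat \<Rightarrow> cmd \<Rightarrow> cmd" where
  "liftn k (Var i) = Var i"
| "liftn k (Lam M) = Lam (liftn k M)"
| "liftn k (App M N) = App (liftn k M) (liftn k N)"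
| "liftn k (Mu C) = Mu (liftn_c (Suc k) C)"
| "liftn_c k (Cmd a M) = Cmd (if a < k then a else Suc a) (liftn k M)"

primrec substv :: "nat \<Rightarrow> trm \<Rightarrow> trm \<Rightarrow> trm" and substv_c :: "nat \<Rightarrow> trm \<Rightarrow> cmd \<Rightarrow> cmd" where
  "substv k N (Var i) = (if i < k then Var i else if i = k then N else Var (i - 1))"
| "substv k N (Lam M) = Lam (substv (Suc k) (liftv 0 N) M)"
| "substv k N (App M P) = App (substv k N M) (substv k N P)"
| "substv k N (Mu C) = Mu (substv_c k (liftn 0 N) C)"
| "substv_c k N (Cmd a M) = Cmd a (substv k N M)"

primrec renn :: "nat \<Rightarrow> nat \<Rightarrow> trm \<Rightarrow> trm" and renn_c :: "nat \<Rightarrow> nat \<Rightarrow> cmd \<Rightarrow> cmd" where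
  "renn k a (Var i) = Var i"
| "renn k a (Lam M) = Lam (renn k a M)"
| "renn k a (App M N) = App (renn k a M) (renn k a N)"
| "renn k a (Mu C) = Mu (renn_c (Suc k) (Suc a) C)"
| "renn_c k a (Cmd b M) =
     Cmd (if b < k then b else if b = k then a else b - 1) (renn k a M)"

primrec strsub :: "nat \<Rightarrow> trm \<Rightarrow> trm \<Rightarrow> trm" and strsub_c :: "nat \<Rightarrow> trm \<Rightarrow> cmd \<Rightarrow> cmd" where
  "strsub k L (Var i) = Var i"
| "strsub k L (Lam M) = Lam (strsub k (liftv 0 L) M)"
| "strsub k L (App M N) = App (strsub k L M) (strsub k L N)"
| "strsub k L (Mu C) = Mu (strsub_c (Suc k) (liftn 0 L) C)"
| "strsub_c k L (Cmd b M) =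
     (if b = k then Cmd b (App (strsub k L M) L) else Cmd b (strsub k L M))"

inductive red :: "trm \<Rightarrow> trm \<Rightarrow> bool" and red_c :: "cmd \<Rightarrow> cmd \<Rightarrow> bool" where
  beta: "red (App (Lam M) N) (substv 0 N M)"
| mu:   "red (App (Mu C) N) (Mu (strsub_c 0 (liftn 0 N) C))"
| ren:  "red_c (Cmd a (Mu C)) (renn_c 0 a C)"
| lam:  "red M M' \<Longrightarrow> red (Lam M) (Lam M')"
| appL: "red M M' \<Longrightarrow> red (App M N) (App M' N)"
| appR: "red N N' \<Longrightarrow> red (App M N) (App M N')"
| muC:  "red_c C C' \<Longrightarrow> red (Mu C) (Mu C')"
| cmd:  "red M M' \<Longrightarrow> red_c (Cmd a M) (Cmd a M')"

datatype 'a ty = Psi 'a | Om | And "'a ty" "'a ty" | Arr "'a ty" "'a ty" | Prod "'a ty" "'a ty"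

fun isR :: "'a ty \<Rightarrow> bool" where
  "isR (Psi a) = True"
| "isR Om = True"
| "isR (And s t) = (isR s \<and> isR t)"
| "isR (Arr _ _) = False"
| "isR (Prod _ _) = False"

fun isD :: "'a ty \<Rightarrow> bool" and isC :: "'a ty \<Rightarrow> bool" where
  "isD (Psi a) = True"
| "isD Om = True"
| "isD (And s t) = (isD s \<and> isD t)"
| "isD (Arr k r) = (isC k \<and> isR r)"
| "isD (Prod _ _) = False"
| "isC (Psi a) = False"
| "isC Om = True"
| "isC (And s t) = (isC s \<and> isC t)"
| "isC (Arr _ _) = False"
| "isC (Prod d k) = (isD d \<and> isC k)"

inductive leR :: "'a::complete_lattice ty \<Rightarrow> 'a ty \<Rightarrow> bool"
  and leD :: "'a ty \<Rightarrow> 'a ty \<Rightarrow> bool"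
  and leC :: "'a ty \<Rightarrow> 'a ty \<Rightarrow> bool" where
  R_refl: "isR s \<Longrightarrow> leR s s"
| R_trans: "leR s t \<Longrightarrow> leR t u \<Longrightarrow> leR s u"
| R_andL: "isR s \<Longrightarrow> isR t \<Longrightarrow> leR (And s t) s"
| R_andR: "isR s \<Longrightarrow> isR t \<Longrightarrow> leR (And s t) t"
| R_top: "isR s \<Longrightarrow> leR s Om"
| R_glb: "leR r s \<Longrightarrow> leR r t \<Longrightarrow> leR r (And s t)"
| R_bot1: "leR (Psi bot) Om"
| R_bot2: "leR Om (Psi bot)"
| R_sup1: "leR (Psi (sup a b)) (And (Psi a) (Psi b))"
| R_sup2: "leR (And (Psi a) (Psi b)) (Psi (sup a b))"
| D_refl: "isD s \<Longrightarrow> leD s s"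
| D_trans: "leD s t \<Longrightarrow> leD t u \<Longrightarrow> leD s u"
| D_andL: "isD s \<Longrightarrow> isD t \<Longrightarrow> leD (And s t) s"
| D_andR: "isD s \<Longrightarrow> isD t \<Longrightarrow> leD (And s t) t"
| D_top: "isD s \<Longrightarrow> leD s Om"
| D_glb: "leD r s \<Longrightarrow> leD r t \<Longrightarrow> leD r (And s t)"
| D_R: "leR s t \<Longrightarrow> leD s t"
| D_om_arr: "leD Om (Arr Om Om)"
| D_psi1: "leD (Psi a) (Arr Om (Psi a))"
| D_psi2: "leD (Arr Om (Psi a)) (Psi a)"
| D_arr_and: "isC k \<Longrightarrow> isR r1 \<Longrightarrow> isR r2 \<Longrightarrow>
    leD (And (Arr k r1) (Arr k r2)) (Arr k (And r1 r2))"
| D_arr: "leC k' k \<Longrightarrow> leR r r' \<Longrightarrow> leD (Arr k r) (Arr k' r')"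
| C_refl: "isC s \<Longrightarrow> leC s s"
| C_trans: "leC s t \<Longrightarrow> leC t u \<Longrightarrow> leC s u"
| C_andL: "isC s \<Longrightarrow> isC t \<Longrightarrow> leC (And s t) s"
| C_andR: "isC s \<Longrightarrow> isC t \<Longrightarrow> leC (And s t) t"
| C_top: "isC s \<Longrightarrow> leC s Om"
| C_glb: "leC r s \<Longrightarrow> leC r t \<Longrightarrow> leC r (And s t)"
| C_om_prod: "leC Om (Prod Om Om)"
| C_prod_and: "isD d1 \<Longrightarrow> isD d2 \<Longrightarrow> isC k1 \<Longrightarrow> isC k2 \<Longrightarrow>
    leC (And (Prod d1 k1) (Prod d2 k2)) (Prod (And d1 d2) (And k1 k2))"
| C_prod: "leD d d' \<Longrightarrow> leC k k' \<Longrightarrow> leC (Prod d k) (Prod d' k')"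

text \<open>Bases and contexts are total functions (value Om outside the domain);
  de Bruijn index 0 is the most recently bound variable / name.\<close>

definition scons :: "'a ty \<Rightarrow> (nat \<Rightarrow> 'a ty) \<Rightarrow> nat \<Rightarrow> 'a ty" where
  "scons d G = (\<lambda>i. if i = 0 then d else G (i - 1))"

inductive typing :: "(nat \<Rightarrow> 'a::complete_lattice ty) \<Rightarrow> trm \<Rightarrow> 'a ty \<Rightarrow> (nat \<Rightarrow> 'a ty) \<Rightarrow> bool"
  and typing_c :: "(nat \<Rightarrow> 'a ty) \<Rightarrow> cmd \<Rightarrow> 'a ty \<Rightarrow> (nat \<Rightarrow> 'a ty) \<Rightarrow> bool" where
  Ax: "typing G (Var x) (G x) D"
| Abs: "isD d \<Longrightarrow> typing (scons d G) M (Arr k r) D \<Longrightarrow> typing G (Lam M) (Arr (Prod d k) r) D"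
| App: "typing G M (Arr (Prod d k) r) D \<Longrightarrow> typing G N d D \<Longrightarrow> typing G (App M N) (Arr k r) D"
| Cmd: "typing G M d D \<Longrightarrow> typing_c G (Cmd a M) (Prod d (D a)) D"
| Mu: "isC k \<Longrightarrow> typing_c G C (Prod (Arr k' r) k') (scons k D) \<Longrightarrow> typing G (Mu C) (Arr k r) D"
| And: "typing G M s D \<Longrightarrow> typing G M t D \<Longrightarrow> typing G M (And s t) D"
| Omega: "typing G M Om D"
| Sub: "typing G M s D \<Longrightarrow> leD s t \<Longrightarrow> typing G M t D"
| And_c: "typing_c G C s D \<Longrightarrow> typing_c G C t D \<Longrightarrow> typing_c G C (And s t) D"
| Omega_c: "typing_c G C Om D"
| Sub_c: "typing_c G C s D \<Longrightarrow> leC s t \<Longrightarrow> typing_c G C t D"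

end

theory Submission imports Defs begin

lemma isR_isD: "isR s \<Longrightarrow> isD s"
  by (induction s) auto

lemma le_wf:
  shows "leR s t \<Longrightarrow> isR s \<and> isR t"
    and "leD s t \<Longrightarrow> isD s \<and> isD t"
    and "leC s t \<Longrightarrow> isC s \<and> isC t"
  by (induct rule: leR_leD_leC.inducts) (auto simp: isR_isD)

lemma typing_wf:
  shows "typing G M t D \<Longrightarrow> (\<forall>x. isD (G x)) \<Longrightarrow> (\<forall>a. isC (D a)) \<Longrightarrow> isD t"
    and "typing_c G C t D \<Longrightarrow> (\<forall>x. isD (G x)) \<Longrightarrow> (\<forall>a. isC (D a)) \<Longrightarrow> isC t"
  by (induct rule: typing_typing_c.inducts) (auto simp: scons_def dest: le_wf)

fun psi :: "'a ty \<Rightarrow> 'a ty \<Rightarrow> 'a ty" where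
  "psi e (Psi a) = Arr (Prod e Om) (Psi a)"
| "psi e Om = Om"
| "psi e (And s t) = And (psi e s) (psi e t)"
| "psi e (Arr k r) = Arr (Prod e k) r"
| "psi e (Prod _ _) = Om"

fun theta :: "'a ty \<Rightarrow> 'a ty \<Rightarrow> 'a ty" where
  "theta e (Prod d k) = Prod (psi e d) (Prod e k)"
| "theta e Om = Prod Om (Prod e Om)"
| "theta e (And s t) = And (theta e s) (theta e t)"
| "theta e _ = Om"

lemma isD_psi: "isD e \<Longrightarrow> isD s \<Longrightarrow> isD (psi e s)"
  by (induction s) auto

lemma isC_theta: "isD e \<Longrightarrow> isC s \<Longrightarrow> isC (theta e s)"
  by (induction s) (auto simp: isD_psi)

lemma theta_top: "isD e \<Longrightarrow> isC s \<Longrightarrow> leC (theta e s) (Prod Om (Prod e Om))"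
proof (induction s)
  case (Prod d k)
  then show ?case by (auto intro!: C_prod D_top isD_psi D_refl C_top)
next
  case Om
  then show ?case by (auto intro!: C_refl)
next
  case (And s t)
  then show ?case by (auto intro: C_trans C_andL isC_theta)
qed auto

lemma psi_theta_mono:
  shows "leR s t \<Longrightarrow> isD (e::'a::complete_lattice ty) \<Longrightarrow> leD (psi e s) (psi e t)"
    and "leD s t \<Longrightarrow> isD e \<Longrightarrow> leD (psi e s) (psi e t)"
    and "leC s t \<Longrightarrow> isD e \<Longrightarrow> leC (theta e s) (theta e t)"
proof (induct rule: leR_leD_leC.inducts)
  case (R_refl s) then show ?case by (intro leR_leD_leC.D_refl isD_psi) (auto simp: isR_isD)
next
  case (R_trans s t u) then show ?case by (auto intro: D_trans)
next
  case (R_andL s t) then show ?case by simp (intro leR_leD_leC.D_andL isD_psi, auto simp: isR_isD)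
next
  case (R_andR s t) then show ?case by simp (intro leR_leD_leC.D_andR isD_psi, auto simp: isR_isD)
next
  case (R_top s) then show ?case by simp (intro leR_leD_leC.D_top isD_psi, auto simp: isR_isD)
next
  case (R_glb r s t) then show ?case by (auto intro: D_glb)
next
  case R_bot1 then show ?case by (auto intro!: D_top)
next
  case R_bot2 then show ?case
    by simp (rule D_trans[OF D_om_arr D_arr[OF C_top leR_leD_leC.R_bot2]], simp)
next
  case (R_sup1 a b)
  have X: "leC (Prod e Om) (Prod e Om)" using R_sup1 by (auto intro!: C_refl)
  show ?case using R_sup1
    by (auto intro!: D_glb D_arr[OF X] R_trans[OF leR_leD_leC.R_sup1] leR_leD_leC.R_andL leR_leD_leC.R_andR)
next
  case (R_sup2 a b)
  have X: "leC (Prod e Om) (Prod e Om)" using R_sup2 by (auto intro!: C_refl)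
  show ?case using R_sup2
    by simp (rule D_trans[OF D_arr_and D_arr[OF X leR_leD_leC.R_sup2]], auto)
next
  case (D_refl s) then show ?case by (auto intro!: leR_leD_leC.D_refl isD_psi)
next
  case (D_trans s t u) then show ?case by (auto intro: leR_leD_leC.D_trans)
next
  case (D_andL s t) then show ?case by (auto intro!: leR_leD_leC.D_andL isD_psi)
next
  case (D_andR s t) then show ?case by (auto intro!: leR_leD_leC.D_andR isD_psi)
next
  case (D_top s) then show ?case by (auto intro!: leR_leD_leC.D_top isD_psi)
next
  case (D_glb r s t) then show ?case by (auto intro: leR_leD_leC.D_glb)
next
  case (D_R s t) then show ?case by auto
next
  case D_om_arr then show ?case
    by simp (rule leR_leD_leC.D_trans[OF leR_leD_leC.D_om_arr D_arr[OF C_top R_refl]], auto)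
next
  case (D_psi1 a) then show ?case by (auto intro!: leR_leD_leC.D_refl)
next
  case (D_psi2 a) then show ?case by (auto intro!: leR_leD_leC.D_refl)
next
  case (D_arr_and k r1 r2) then show ?case by (auto intro!: leR_leD_leC.D_arr_and)
next
  case (D_arr k' k r r')
  then show ?case by (auto intro!: leR_leD_leC.D_arr C_prod leR_leD_leC.D_refl)
next
  case (C_refl s) then show ?case by (auto intro!: leR_leD_leC.C_refl isC_theta)
next
  case (C_trans s t u) then show ?case by (auto intro: leR_leD_leC.C_trans)
next
  case (C_andL s t) then show ?case by (auto intro!: leR_leD_leC.C_andL isC_theta)
next
  case (C_andR s t) then show ?case by (auto intro!: leR_leD_leC.C_andR isC_theta)
next
  case (C_top s) then show ?case by (auto intro!: theta_top)
next
  case (C_glb r s t) then show ?case by (auto intro: leR_leD_leC.C_glb)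
next
  case C_om_prod then show ?case by (auto intro!: leR_leD_leC.C_refl)
next
  case (C_prod_and d1 d2 k1 k2)
  have "leC (And (Prod e k1) (Prod e k2)) (Prod (And e e) (And k1 k2))"
    using C_prod_and by (auto intro!: leR_leD_leC.C_prod_and)
  moreover have "leC (Prod (And e e) (And k1 k2)) (Prod e (And k1 k2))"
    using C_prod_and by (auto intro!: C_prod leR_leD_leC.D_andL leR_leD_leC.C_refl)
  ultimately have A: "leC (And (Prod e k1) (Prod e k2)) (Prod e (And k1 k2))"
    by (rule leR_leD_leC.C_trans)
  show ?case using C_prod_and
    by simp (rule leR_leD_leC.C_trans[OF leR_leD_leC.C_prod_and C_prod[OF _ A]],
        auto intro!: isD_psi leR_leD_leC.D_refl)
next
  case (C_prod d d' k k')
  then show ?case by (auto intro!: leR_leD_leC.C_prod leR_leD_leC.D_refl)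
qed


lemma arrow_closure:
  assumes "isD t"
    and "\<And>k r. isC k \<Longrightarrow> isR r \<Longrightarrow> leD t (Arr k r) \<Longrightarrow> typing G P (Arr k r) D"
  shows "typing G P t D"
  using assms
proof (induction t)
  case (Psi a)
  have "typing G P (Arr Om (Psi a)) D" using Psi(2)[of Om "Psi a"] by (simp add: D_psi1)
  then show ?case by (rule Sub) (rule D_psi2)
next
  case Om show ?case by (rule Omega)
next
  case (And s u)
  have "typing G P s D"
  proof (rule And(1))
    show "isD s" using And(3) by simp
    fix k r assume "isC k" "isR r" "leD s (Arr k r)"
    then show "typing G P (Arr k r) D" using And(3) by (intro And(4)) (auto intro: D_trans D_andL)
  qed
  moreover have "typing G P u D"
  proof (rule And(2))
    show "isD u" using And(3) by simp
    fix k r assume "isC k" "isR r" "leD u (Arr k r)"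
    then show "typing G P (Arr k r) D" using And(3) by (intro And(4)) (auto intro: D_trans D_andR)
  qed
  ultimately show ?case by (rule typing_typing_c.And)
next
  case (Arr k r)
  then have "isD (Arr k r)" by simp
  then have "leD (Arr k r) (Arr k r)" by (rule D_refl)
  then show ?case using Arr.prems(2)[of k r] Arr.prems(1) by simp
qed auto

definition ins :: "nat \<Rightarrow> 'a \<Rightarrow> (nat \<Rightarrow> 'a) \<Rightarrow> nat \<Rightarrow> 'a" where
  "ins j e G = (\<lambda>i. if i < j then G i else if i = j then e else G (i - 1))"

definition sh :: "nat \<Rightarrow> (nat \<Rightarrow> 'a) \<Rightarrow> nat \<Rightarrow> 'a" where
  "sh j G = (\<lambda>i. G (if i < j then i else Suc i))"

lemma sh_scons: "sh (Suc j) (scons d G) = scons d (sh j G)"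
  by (auto simp: sh_def scons_def fun_eq_iff)

lemma sh0_scons: "sh 0 (scons d G) = G"
  by (auto simp: sh_def scons_def fun_eq_iff)

lemma ins_scons: "ins (Suc j) e (scons d G) = scons d (ins j e G)"
  by (auto simp: ins_def scons_def fun_eq_iff)

lemma ins0: "ins 0 e G = scons e G"
  by (auto simp: ins_def scons_def fun_eq_iff)

lemma upd_scons: "(scons d G)(Suc j := X) = scons d (G(j := X))"
  by (auto simp: scons_def fun_eq_iff)

lemma upd0_scons: "(scons d G)(0 := X) = scons X G"
  by (auto simp: scons_def fun_eq_iff)

lemma liftv_inv:
  "liftv j N = Var x \<longleftrightarrow> (\<exists>y. N = Var y \<and> x = (if y < j then y else Suc y))"
  "liftv j N = Lam P \<longleftrightarrow> (\<exists>N0. N = Lam N0 \<and> P = liftv (Suc j) N0)"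
  "liftv j N = App P Q \<longleftrightarrow> (\<exists>N1 N2. N = App N1 N2 \<and> P = liftv j N1 \<and> Q = liftv j N2)"
  "liftv j N = Mu C \<longleftrightarrow> (\<exists>C0. N = Mu C0 \<and> C = liftv_c j C0)"
  "liftv_c j C1 = Cmd a P \<longleftrightarrow> (\<exists>N. C1 = Cmd a N \<and> P = liftv j N)"
  by (cases N; auto; fail)+ (cases C1; auto)

lemma liftn_inv:
  "liftn j N = Var x \<longleftrightarrow> N = Var x"
  "liftn j N = Lam P \<longleftrightarrow> (\<exists>N0. N = Lam N0 \<and> P = liftn j N0)"
  "liftn j N = App P Q \<longleftrightarrow> (\<exists>N1 N2. N = App N1 N2 \<and> P = liftn j N1 \<and> Q = liftn j N2)"
  "liftn j N = Mu C \<longleftrightarrow> (\<exists>C0. N = Mu C0 \<and> C = liftn_c (Suc j) C0)"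
  "liftn_c j C1 = Cmd a P \<longleftrightarrow> (\<exists>b N. C1 = Cmd b N \<and> a = (if b < j then b else Suc b) \<and> P = liftn j N)"
  by (cases N; auto; fail)+ (cases C1; auto)

lemma antiweak_v:
  shows "typing G' P t D \<Longrightarrow> (\<And>j N. liftv j N = P \<Longrightarrow> typing (sh j G') N t D)"
    and "typing_c G' C t D \<Longrightarrow> (\<And>j C0. liftv_c j C0 = C \<Longrightarrow> typing_c (sh j G') C0 t D)"
proof (induct arbitrary: and rule: typing_typing_c.inducts)
  case (Ax G x D)
  then obtain y where "N = Var y" "x = (if y < j then y else Suc y)" by (auto simp: liftv_inv)
  then show ?case using typing_typing_c.Ax[of "sh j G" y D] by (simp add: sh_def)
next
  case (Abs d G M k r D)
  then obtain N0 where "N = Lam N0" "M = liftv (Suc j) N0" by (auto simp: liftv_inv)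
  then show ?case using Abs(1) Abs(3)[of "Suc j" N0] by (auto intro!: typing_typing_c.Abs simp: sh_scons)
next
  case (App G M d k r D N')
  then show ?case by (auto simp: liftv_inv intro!: typing_typing_c.App)
next
  case (Cmd G M d D a)
  then show ?case by (auto simp: liftv_inv intro!: typing_typing_c.Cmd)
next
  case (Mu k G C k' r D)
  then show ?case by (auto simp: liftv_inv intro!: typing_typing_c.Mu)
qed (auto intro: typing_typing_c.intros)

lemma antiweak_n:
  shows "typing G P t D' \<Longrightarrow> (\<And>j N. liftn j N = P \<Longrightarrow> typing G N t (sh j D'))"
    and "typing_c G C t D' \<Longrightarrow> (\<And>j C0. liftn_c j C0 = C \<Longrightarrow> typing_c G C0 t (sh j D'))"
proof (induct arbitrary: and rule: typing_typing_c.inducts)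
  case (Ax G x D)
  then show ?case by (auto simp: liftn_inv intro: typing_typing_c.Ax)
next
  case (Abs d G M k r D)
  then show ?case by (auto simp: liftn_inv intro!: typing_typing_c.Abs)
next
  case (App G M d k r D N')
  then show ?case by (auto simp: liftn_inv intro!: typing_typing_c.App)
next
  case (Cmd G M d D a)
  then obtain b N where "C0 = Cmd b N" "a = (if b < j then b else Suc b)" "M = liftn j N"
    by (auto simp: liftn_inv)
  then show ?case using Cmd typing_typing_c.Cmd[of G N d "sh j D" b] by (auto simp: sh_def)
next
  case (Mu k G C k' r D)
  then obtain C1 where "N = Mu C1" "C = liftn_c (Suc j) C1" by (auto simp: liftn_inv)
  then show ?case using Mu(1) Mu(3)[of "Suc j" C1] by (auto simp: sh_scons intro!: typing_typing_c.Mu)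
qed (auto intro: typing_typing_c.intros)


lemma substv_inv:
  "substv k N M = Var x \<longleftrightarrow> (M = Var k \<and> N = Var x) \<or> (\<exists>i. M = Var i \<and> i \<noteq> k \<and> x = (if i < k then i else i - 1))"
  "substv k N M = Lam P \<longleftrightarrow> (M = Var k \<and> N = Lam P) \<or> (\<exists>M0. M = Lam M0 \<and> P = substv (Suc k) (liftv 0 N) M0)"
  "substv k N M = App P Q \<longleftrightarrow> (M = Var k \<and> N = App P Q) \<or> (\<exists>M1 M2. M = App M1 M2 \<and> P = substv k N M1 \<and> Q = substv k N M2)"
  "substv k N M = Mu C \<longleftrightarrow> (M = Var k \<and> N = Mu C) \<or> (\<exists>C0. M = Mu C0 \<and> C = substv_c k (liftn 0 N) C0)"
  "substv_c k N C1 = Cmd a P \<longleftrightarrow> (\<exists>M. C1 = Cmd a M \<and> P = substv k N M)"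
  by (cases M; auto; fail)+ (cases C1; auto)

lemma le_and_split: "leD d (And d1 d2) \<Longrightarrow> leD d d1 \<and> leD d d2"
proof -
  assume a: "leD d (And d1 d2)"
  then have "isD (And d1 d2)" using le_wf(2) by blast
  then have "leD (And d1 d2) d1" "leD (And d1 d2) d2" by (auto intro: D_andL D_andR)
  then show ?thesis using a by (blast intro: D_trans[OF a])
qed

lemma var_case:
  assumes "typing G N t D"
  shows "\<exists>d0. typing G N d0 D \<and> (\<forall>d. leD d d0 \<longrightarrow> typing (ins k d G) (Var k) t D)"
proof (intro exI conjI allI impI)
  show "typing G N t D" by (rule assms)
  fix d assume dt: "leD d t"
  have "typing (ins k d G) (Var k) d D" using Ax[of "ins k d G" k D] by (simp add: ins_def)
  then show "typing (ins k d G) (Var k) t D" using dt by (rule Sub)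
qed

lemma subst_lemma:
  shows "typing G P t D \<Longrightarrow> (\<And>k N M. substv k N M = P \<Longrightarrow>
      \<exists>d0. typing G N d0 D \<and> (\<forall>d. leD d d0 \<longrightarrow> typing (ins k d G) M t D))"
    and "typing_c G C t D \<Longrightarrow> (\<And>k N C0. substv_c k N C0 = C \<Longrightarrow>
      \<exists>d0. typing G N d0 D \<and> (\<forall>d. leD d d0 \<longrightarrow> typing_c (ins k d G) C0 t D))"
proof (induct arbitrary: and rule: typing_typing_c.inducts)
  case (Ax G x D)
  from Ax[unfolded substv_inv] show ?case
  proof (elim disjE exE conjE)
    assume "M = Var k" "N = Var x"
    then show ?thesis using var_case[OF typing_typing_c.Ax[of G x D]] by simp
  next
    fix i assume i: "M = Var i" "i \<noteq> k" "x = (if i < k then i else i - 1)"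
    show ?thesis
    proof (intro exI conjI allI impI)
      show "typing G N Om D" by (rule Omega)
      fix d
      have "ins k d G i = G x" using i by (auto simp: ins_def)
      then show "typing (ins k d G) M (G x) D" using i typing_typing_c.Ax[of "ins k d G" i D] by simp
    qed
  qed
next
  case (Abs d G M' k' r D)
  from Abs(4)[unfolded substv_inv] show ?case
  proof (elim disjE exE conjE)
    assume "M = Var k" "N = Lam M'"
    then show ?thesis using var_case[OF typing_typing_c.Abs[OF Abs(1,2)]] by simp
  next
    fix M0 assume m: "M = Lam M0" "M' = substv (Suc k) (liftv 0 N) M0"
    then obtain d0 where d0: "typing (scons d G) (liftv 0 N) d0 D"
       "\<forall>e. leD e d0 \<longrightarrow> typing (ins (Suc k) e (scons d G)) M0 (Arr k' r) D"
      using Abs(3)[of "Suc k" "liftv 0 N" M0] by auto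
    have "typing G N d0 D" using antiweak_v(1)[OF d0(1) refl] by (simp add: sh0_scons)
    then show ?thesis using d0(2) m Abs(1) by (auto simp: ins_scons intro!: typing_typing_c.Abs)
  qed
next
  case (App G M1 d k' r D M2)
  from App(5)[unfolded substv_inv] show ?case
  proof (elim disjE exE conjE)
    assume "M = Var k" "N = App M1 M2"
    then show ?thesis using var_case[OF typing_typing_c.App[OF App(1,3)]] by simp
  next
    fix P1 P2 assume m: "M = App P1 P2" "M1 = substv k N P1" "M2 = substv k N P2"
    obtain d1 where d1: "typing G N d1 D" "\<forall>e. leD e d1 \<longrightarrow> typing (ins k e G) P1 (Arr (Prod d k') r) D"
      using App(2)[of k N P1] m by auto
    obtain d2 where d2: "typing G N d2 D" "\<forall>e. leD e d2 \<longrightarrow> typing (ins k e G) P2 d D"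
      using App(4)[of k N P2] m by auto
    show ?thesis
    proof (intro exI conjI allI impI)
      show "typing G N (And d1 d2) D" using d1 d2 by (auto intro: typing_typing_c.And)
      fix e assume "leD e (And d1 d2)"
      then show "typing (ins k e G) M (Arr k' r) D" using d1 d2 m
        by (auto dest!: le_and_split intro: typing_typing_c.App)
    qed
  qed
next
  case (Cmd G M' d D a)
  from Cmd(3)[unfolded substv_inv] obtain M0 where m: "C0 = Cmd a M0" "M' = substv k N M0" by auto
  then show ?case using Cmd(2)[of k N M0] by (auto intro: typing_typing_c.Cmd)
next
  case (Mu k' G C k'' r D)
  from Mu(4)[unfolded substv_inv] show ?case
  proof (elim disjE exE conjE)
    assume "M = Var k" "N = Mu C"
    then show ?thesis using var_case[OF typing_typing_c.Mu[OF Mu(1,2)]] by simp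
  next
    fix C0 assume m: "M = Mu C0" "C = substv_c k (liftn 0 N) C0"
    then obtain d0 where d0: "typing G (liftn 0 N) d0 (scons k' D)"
       "\<forall>e. leD e d0 \<longrightarrow> typing_c (ins k e G) C0 (Prod (Arr k'' r) k'') (scons k' D)"
      using Mu(3)[of k "liftn 0 N" C0] by auto
    have "typing G N d0 D" using antiweak_n(1)[OF d0(1) refl] by (simp add: sh0_scons)
    then show ?thesis using d0(2) m Mu(1) by (auto intro!: typing_typing_c.Mu)
  qed
next
  case (And G M' s D t)
  obtain d1 where d1: "typing G N d1 D" "\<forall>e. leD e d1 \<longrightarrow> typing (ins k e G) M s D"
    using And(2)[OF And(5)] by auto
  obtain d2 where d2: "typing G N d2 D" "\<forall>e. leD e d2 \<longrightarrow> typing (ins k e G) M t D"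
    using And(4)[OF And(5)] by auto
  show ?case
  proof (intro exI conjI allI impI)
    show "typing G N (And d1 d2) D" using d1 d2 by (auto intro: typing_typing_c.And)
    fix e assume "leD e (And d1 d2)"
    then show "typing (ins k e G) M (And s t) D" using d1 d2
      by (auto dest!: le_and_split intro: typing_typing_c.And)
  qed
next
  case (Omega G M' D)
  show ?case by (intro exI[of _ Om]) (auto intro: typing_typing_c.Omega)
next
  case (Sub G M' s D t)
  obtain d1 where d1: "typing G N d1 D" "\<forall>e. leD e d1 \<longrightarrow> typing (ins k e G) M s D"
    using Sub(2)[OF Sub(4)] by auto
  show ?case using d1 Sub(3) by (blast intro: typing_typing_c.Sub)
next
  case (And_c G C s D t)
  obtain d1 where d1: "typing G N d1 D" "\<forall>e. leD e d1 \<longrightarrow> typing_c (ins k e G) C0 s D"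
    using And_c(2)[OF And_c(5)] by auto
  obtain d2 where d2: "typing G N d2 D" "\<forall>e. leD e d2 \<longrightarrow> typing_c (ins k e G) C0 t D"
    using And_c(4)[OF And_c(5)] by auto
  show ?case
  proof (intro exI conjI allI impI)
    show "typing G N (And d1 d2) D" using d1 d2 by (auto intro: typing_typing_c.And)
    fix e assume "leD e (And d1 d2)"
    then show "typing_c (ins k e G) C0 (And s t) D" using d1 d2
      by (auto dest!: le_and_split intro: typing_typing_c.And_c)
  qed
next
  case (Omega_c G C D)
  show ?case by (intro exI[of _ Om]) (auto intro: typing_typing_c.Omega typing_typing_c.Omega_c)
next
  case (Sub_c G C s D t)
  obtain d1 where d1: "typing G N d1 D" "\<forall>e. leD e d1 \<longrightarrow> typing_c (ins k e G) C0 s D"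
    using Sub_c(2)[OF Sub_c(4)] by auto
  show ?case using d1 Sub_c(3) by (blast intro: typing_typing_c.Sub_c)
qed


fun hdn :: "cmd \<Rightarrow> nat" where "hdn (Cmd a M) = a"

lemma strsub_inv:
  "strsub j L M = Var x \<longleftrightarrow> M = Var x"
  "strsub j L M = Lam P \<longleftrightarrow> (\<exists>M0. M = Lam M0 \<and> P = strsub j (liftv 0 L) M0)"
  "strsub j L M = App P Q \<longleftrightarrow> (\<exists>M1 M2. M = App M1 M2 \<and> P = strsub j L M1 \<and> Q = strsub j L M2)"
  "strsub j L M = Mu C \<longleftrightarrow> (\<exists>C0. M = Mu C0 \<and> C = strsub_c (Suc j) (liftn 0 L) C0)"
  "strsub_c j L C1 = Cmd a P \<longleftrightarrow> (\<exists>M. C1 = Cmd a M \<and> P = (if a = j then App (strsub j L M) L else strsub j L M))"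
  by (cases M; auto; fail)+ (cases C1; auto)

lemma strsub_lemma:
  shows "typing G P t D \<Longrightarrow> (\<forall>x. isD (G x)) \<Longrightarrow> (\<forall>a. isC (D a)) \<Longrightarrow>
      (\<forall>j L M. strsub j L M = P \<longrightarrow>
        (\<exists>d0. typing G L d0 D \<and> (\<forall>d. leD d d0 \<longrightarrow> typing G M t (D(j := Prod d (D j)))))) \<and>
      (\<forall>j L M. App (strsub j L M) L = P \<longrightarrow>
        (\<exists>d0. typing G L d0 D \<and> (\<forall>d. leD d d0 \<longrightarrow> typing G M (psi d t) (D(j := Prod d (D j))))))"
    and "typing_c G C t D \<Longrightarrow> (\<forall>x. isD (G x)) \<Longrightarrow> (\<forall>a. isC (D a)) \<Longrightarrow>
      (\<forall>j L C0. strsub_c j L C0 = C \<longrightarrow>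
        (\<exists>d0. typing G L d0 D \<and> (\<forall>d. leD d d0 \<longrightarrow>
            typing_c G C0 (if hdn C0 = j then theta d t else t) (D(j := Prod d (D j))))))"
proof (induct rule: typing_typing_c.inducts)
  case (Ax G x D)
  show ?case
  proof (intro conjI allI impI)
    fix j L M assume "strsub j L M = Var x"
    then have "M = Var x" by (simp add: strsub_inv)
    then show "\<exists>d0. typing G L d0 D \<and> (\<forall>d. leD d d0 \<longrightarrow> typing G M (G x) (D(j := Prod d (D j))))"
      by (auto intro!: exI[of _ Om] typing_typing_c.Omega typing_typing_c.Ax)
  qed auto
next
  case (Abs d G M' k r D)
  have wf: "\<forall>x. isD (scons d G x)" using Abs(1,4) by (auto simp: scons_def)
  show ?case
  proof (intro conjI allI impI)
    fix j L M assume "strsub j L M = Lam M'"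
    then obtain M0 where m: "M = Lam M0" "M' = strsub j (liftv 0 L) M0" by (auto simp: strsub_inv)
    then obtain d0 where d0: "typing (scons d G) (liftv 0 L) d0 D"
       "\<forall>e. leD e d0 \<longrightarrow> typing (scons d G) M0 (Arr k r) (D(j := Prod e (D j)))"
      using Abs(3)[OF wf Abs(5)] m by blast
    have "typing G L d0 D" using antiweak_v(1)[OF d0(1) refl] by (simp add: sh0_scons)
    then show "\<exists>d0. typing G L d0 D \<and> (\<forall>e. leD e d0 \<longrightarrow> typing G M (Arr (Prod d k) r) (D(j := Prod e (D j))))"
      using d0(2) m Abs(1) by (auto intro!: typing_typing_c.Abs)
  qed auto
next
  case (App G M1 d k r D M2)
  show ?case
  proof (intro conjI allI impI)
    fix j L M assume "strsub j L M = App M1 M2"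
    then obtain P1 P2 where m: "M = App P1 P2" "M1 = strsub j L P1" "M2 = strsub j L P2"
      by (auto simp: strsub_inv)
    obtain d1 where d1: "typing G L d1 D" "\<forall>e. leD e d1 \<longrightarrow> typing G P1 (Arr (Prod d k) r) (D(j := Prod e (D j)))"
      using App(2)[OF App(5,6)] m by blast
    obtain d2 where d2: "typing G L d2 D" "\<forall>e. leD e d2 \<longrightarrow> typing G P2 d (D(j := Prod e (D j)))"
      using App(4)[OF App(5,6)] m by blast
    show "\<exists>d0. typing G L d0 D \<and> (\<forall>e. leD e d0 \<longrightarrow> typing G M (Arr k r) (D(j := Prod e (D j))))"
    proof (intro exI conjI allI impI)
      show "typing G L (And d1 d2) D" using d1 d2 by (auto intro: typing_typing_c.And)
      fix e assume "leD e (And d1 d2)"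
      then show "typing G M (Arr k r) (D(j := Prod e (D j)))" using d1 d2 m
        by (auto dest!: le_and_split intro: typing_typing_c.App)
    qed
  next
    fix j L M assume a: "App (strsub j L M) L = App M1 M2"
    obtain d1 where d1: "typing G L d1 D" "\<forall>e. leD e d1 \<longrightarrow> typing G M (Arr (Prod d k) r) (D(j := Prod e (D j)))"
      using App(2)[OF App(5,6)] a by blast
    have L2: "typing G L d D" using App(3) a by simp
    have wfa: "isD (Arr (Prod d k) r)" using typing_wf(1)[OF App(1) App(5,6)] .
    show "\<exists>d0. typing G L d0 D \<and> (\<forall>e. leD e d0 \<longrightarrow> typing G M (psi e (Arr k r)) (D(j := Prod e (D j))))"
    proof (intro exI conjI allI impI)
      show "typing G L (And d1 d) D" using d1 L2 by (auto intro: typing_typing_c.And)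
      fix e assume "leD e (And d1 d)"
      then have e: "leD e d1" "leD e d" by (auto dest!: le_and_split)
      have "leD (Arr (Prod d k) r) (Arr (Prod e k) r)"
        using wfa e by (auto intro!: D_arr C_prod C_refl R_refl)
      then show "typing G M (psi e (Arr k r)) (D(j := Prod e (D j)))" using d1 e
        by (auto intro: typing_typing_c.Sub)
    qed
  qed
next
  case (Cmd G M' d D a)
  show ?case
  proof (intro allI impI)
    fix j L C0 assume "strsub_c j L C0 = Cmd a M'"
    then obtain M0 where m: "C0 = Cmd a M0" "M' = (if a = j then App (strsub j L M0) L else strsub j L M0)"
      by (auto simp: strsub_inv)
    show "\<exists>d0. typing G L d0 D \<and> (\<forall>e. leD e d0 \<longrightarrow>
            typing_c G C0 (if hdn C0 = j then theta e (Prod d (D a)) else Prod d (D a)) (D(j := Prod e (D j))))"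
    proof (cases "a = j")
      case True
      obtain d0 where d0: "typing G L d0 D" "\<forall>e. leD e d0 \<longrightarrow> typing G M0 (psi e d) (D(j := Prod e (D j)))"
        using conjunct2[OF Cmd(2)[OF Cmd(3,4)], rule_format, of j L M0] m True by auto
      show ?thesis using d0 m True typing_typing_c.Cmd[of G M0 _ "D(j := Prod _ (D j))" j]
        by auto
    next
      case False
      obtain d0 where d0: "typing G L d0 D" "\<forall>e. leD e d0 \<longrightarrow> typing G M0 d (D(j := Prod e (D j)))"
        using conjunct1[OF Cmd(2)[OF Cmd(3,4)], rule_format, of j L M0] m False by auto
      show ?thesis using d0 m False typing_typing_c.Cmd[of G M0 d "D(j := Prod _ (D j))" a]
        by auto
    qed
  qed
next
  case (Mu k G C k' r D)
  have wf: "\<forall>a. isC (scons k D a)" using Mu(1,5) by (auto simp: scons_def)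
  show ?case
  proof (intro conjI allI impI)
    fix j L M assume "strsub j L M = Mu C"
    then obtain C0 where m: "M = Mu C0" "C = strsub_c (Suc j) (liftn 0 L) C0" by (auto simp: strsub_inv)
    then obtain d0 where d0: "typing G (liftn 0 L) d0 (scons k D)"
       "\<forall>e. leD e d0 \<longrightarrow> typing_c G C0 (if hdn C0 = Suc j then theta e (Prod (Arr k' r) k') else Prod (Arr k' r) k')
           ((scons k D)(Suc j := Prod e (scons k D (Suc j))))"
      using Mu(3)[OF Mu(4) wf] by blast
    have "typing G L d0 D" using antiweak_n(1)[OF d0(1) refl] by (simp add: sh0_scons)
    moreover have "typing G M (Arr k r) (D(j := Prod e (D j)))" if e: "leD e d0" for e
    proof -
      have eq: "(scons k D)(Suc j := Prod e (scons k D (Suc j))) = scons k (D(j := Prod e (D j)))"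
        by (auto simp: scons_def fun_eq_iff)
      note d0e = d0(2)[rule_format, OF e, unfolded eq]
      show ?thesis
    proof (cases "hdn C0 = Suc j")
      case True
      then have "typing_c G C0 (Prod (Arr (Prod e k') r) (Prod e k')) (scons k (D(j := Prod e (D j))))"
        using d0e by simp
      then show ?thesis using m Mu(1) by (auto intro: typing_typing_c.Mu)
    next
      case False
      then have "typing_c G C0 (Prod (Arr k' r) k') (scons k (D(j := Prod e (D j))))"
        using d0e by simp
      then show ?thesis using m Mu(1) by (auto intro: typing_typing_c.Mu)
    qed
    qed
    ultimately show "\<exists>d0. typing G L d0 D \<and> (\<forall>e. leD e d0 \<longrightarrow> typing G M (Arr k r) (D(j := Prod e (D j))))"
      by blast
  qed auto
next
  case (And G M' s D t)
  show ?case
  proof (intro conjI allI impI)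
    fix j L M assume a: "strsub j L M = M'"
    obtain d1 where d1: "typing G L d1 D" "\<forall>e. leD e d1 \<longrightarrow> typing G M s (D(j := Prod e (D j)))"
      using And(2)[OF And(5,6)] a by blast
    obtain d2 where d2: "typing G L d2 D" "\<forall>e. leD e d2 \<longrightarrow> typing G M t (D(j := Prod e (D j)))"
      using And(4)[OF And(5,6)] a by blast
    show "\<exists>d0. typing G L d0 D \<and> (\<forall>e. leD e d0 \<longrightarrow> typing G M (And s t) (D(j := Prod e (D j))))"
      using d1 d2 by (intro exI[of _ "And d1 d2"]) (auto dest!: le_and_split intro: typing_typing_c.And)
  next
    fix j L M assume a: "App (strsub j L M) L = M'"
    obtain d1 where d1: "typing G L d1 D" "\<forall>e. leD e d1 \<longrightarrow> typing G M (psi e s) (D(j := Prod e (D j)))"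
      using And(2)[OF And(5,6)] a by blast
    obtain d2 where d2: "typing G L d2 D" "\<forall>e. leD e d2 \<longrightarrow> typing G M (psi e t) (D(j := Prod e (D j)))"
      using And(4)[OF And(5,6)] a by blast
    show "\<exists>d0. typing G L d0 D \<and> (\<forall>e. leD e d0 \<longrightarrow> typing G M (psi e (And s t)) (D(j := Prod e (D j))))"
      using d1 d2 by (intro exI[of _ "And d1 d2"]) (auto dest!: le_and_split intro: typing_typing_c.And)
  qed
next
  case (Omega G M' D)
  show ?case
    by (intro conjI allI impI exI[of _ Om]) (auto intro: typing_typing_c.Omega)
next
  case (Sub G M' s D t)
  show ?case
  proof (intro conjI allI impI)
    fix j L M assume a: "strsub j L M = M'"
    obtain d1 where d1: "typing G L d1 D" "\<forall>e. leD e d1 \<longrightarrow> typing G M s (D(j := Prod e (D j)))"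
      using Sub(2)[OF Sub(4,5)] a by blast
    show "\<exists>d0. typing G L d0 D \<and> (\<forall>e. leD e d0 \<longrightarrow> typing G M t (D(j := Prod e (D j))))"
      using d1 Sub(3) by (blast intro: typing_typing_c.Sub)
  next
    fix j L M assume a: "App (strsub j L M) L = M'"
    obtain d1 where d1: "typing G L d1 D" "\<forall>e. leD e d1 \<longrightarrow> typing G M (psi e s) (D(j := Prod e (D j)))"
      using Sub(2)[OF Sub(4,5)] a by blast
    show "\<exists>d0. typing G L d0 D \<and> (\<forall>e. leD e d0 \<longrightarrow> typing G M (psi e t) (D(j := Prod e (D j))))"
      using d1 Sub(3) by (blast intro: typing_typing_c.Sub psi_theta_mono(2) dest: le_wf(2))
  qed
next
  case (And_c G C s D t)
  show ?case
  proof (intro allI impI)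
    fix j L C0 assume a: "strsub_c j L C0 = C"
    obtain d1 where d1: "typing G L d1 D" "\<forall>e. leD e d1 \<longrightarrow> typing_c G C0 (if hdn C0 = j then theta e s else s) (D(j := Prod e (D j)))"
      using And_c(2)[OF And_c(5,6)] a by blast
    obtain d2 where d2: "typing G L d2 D" "\<forall>e. leD e d2 \<longrightarrow> typing_c G C0 (if hdn C0 = j then theta e t else t) (D(j := Prod e (D j)))"
      using And_c(4)[OF And_c(5,6)] a by blast
    show "\<exists>d0. typing G L d0 D \<and> (\<forall>e. leD e d0 \<longrightarrow> typing_c G C0 (if hdn C0 = j then theta e (And s t) else And s t) (D(j := Prod e (D j))))"
      using d1 d2 by (intro exI[of _ "And d1 d2"]) (auto dest!: le_and_split intro: typing_typing_c.And typing_typing_c.And_c)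
  qed
next
  case (Omega_c G C D)
  show ?case
  proof (intro allI impI)
    fix j L C0 assume a: "strsub_c j L C0 = C"
    obtain b M0 where c0: "C0 = Cmd b M0" by (cases C0)
    have "typing_c G C0 (if hdn C0 = j then theta e Om else Om) (D(j := Prod e (D j)))" if e: "leD e Om" for e
    proof (cases "b = j")
      case True
      have "typing_c G C0 (Prod Om (Prod e (D j))) (D(j := Prod e (D j)))"
        using typing_typing_c.Cmd[OF typing_typing_c.Omega[of G M0 "D(j := Prod e (D j))"], of j] c0 True by simp
      moreover have "leC (Prod Om (Prod e (D j))) (Prod Om (Prod e Om))"
        using e Omega_c(2) by (auto intro!: C_prod D_refl C_top dest: le_wf(2))
      ultimately show ?thesis using c0 True by (auto intro: Sub_c)
    next
      case False
      then show ?thesis using c0 by (auto intro: typing_typing_c.Omega_c)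
    qed
    then show "\<exists>d0. typing G L d0 D \<and> (\<forall>e. leD e d0 \<longrightarrow> typing_c G C0 (if hdn C0 = j then theta e Om else Om) (D(j := Prod e (D j))))"
      by (intro exI[of _ Om]) (auto intro: typing_typing_c.Omega)
  qed
next
  case (Sub_c G C s D t)
  show ?case
  proof (intro allI impI)
    fix j L C0 assume a: "strsub_c j L C0 = C"
    obtain d1 where d1: "typing G L d1 D" "\<forall>e. leD e d1 \<longrightarrow> typing_c G C0 (if hdn C0 = j then theta e s else s) (D(j := Prod e (D j)))"
      using Sub_c(2)[OF Sub_c(4,5)] a by blast
    show "\<exists>d0. typing G L d0 D \<and> (\<forall>e. leD e d0 \<longrightarrow> typing_c G C0 (if hdn C0 = j then theta e t else t) (D(j := Prod e (D j))))"
    proof (intro exI[of _ d1] conjI allI impI)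
      show "typing G L d1 D" by (rule d1(1))
      fix e assume e: "leD e d1"
      then have "isD e" using le_wf(2) by blast
      then show "typing_c G C0 (if hdn C0 = j then theta e t else t) (D(j := Prod e (D j)))"
        using d1(2)[rule_format, OF e] Sub_c(3) psi_theta_mono(3)[OF Sub_c(3) \<open>isD e\<close>]
        by (auto intro: typing_typing_c.Sub_c)
    qed
  qed
qed


lemma renn_inv:
  "renn j a M = Var x \<longleftrightarrow> M = Var x"
  "renn j a M = Lam P \<longleftrightarrow> (\<exists>M0. M = Lam M0 \<and> P = renn j a M0)"
  "renn j a M = App P Q \<longleftrightarrow> (\<exists>M1 M2. M = App M1 M2 \<and> P = renn j a M1 \<and> Q = renn j a M2)"
  "renn j a M = Mu C \<longleftrightarrow> (\<exists>C0. M = Mu C0 \<and> C = renn_c (Suc j) (Suc a) C0)"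
  "renn_c j a C1 = Cmd b P \<longleftrightarrow> (\<exists>b0 M. C1 = Cmd b0 M \<and> b = (if b0 < j then b0 else if b0 = j then a else b0 - 1) \<and> P = renn j a M)"
  by (cases M; auto; fail)+ (cases C1; auto)

lemma renn_lemma:
  shows "typing G P t D \<Longrightarrow> (\<And>j a M. renn j a M = P \<Longrightarrow> typing G M t (ins j (D a) D))"
    and "typing_c G C t D \<Longrightarrow> (\<And>j a C0. renn_c j a C0 = C \<Longrightarrow> typing_c G C0 t (ins j (D a) D))"
proof (induct arbitrary: and rule: typing_typing_c.inducts)
  case (Ax G x D)
  then show ?case by (auto simp: renn_inv intro: typing_typing_c.Ax)
next
  case (Abs d G M' k r D)
  then show ?case by (auto simp: renn_inv intro!: typing_typing_c.Abs)
next
  case (App G M1 d k r D M2)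
  then show ?case by (auto simp: renn_inv intro!: typing_typing_c.App)
next
  case (Cmd G M' d D b)
  then obtain b0 M0 where m: "C0 = Cmd b0 M0" "b = (if b0 < j then b0 else if b0 = j then a else b0 - 1)" "M' = renn j a M0"
    by (auto simp: renn_inv)
  have "ins j (D a) D b0 = D b" using m by (auto simp: ins_def)
  then show ?case using m Cmd(2)[of j a M0] typing_typing_c.Cmd[of G M0 d "ins j (D a) D" b0] by simp
next
  case (Mu k G C k' r D)
  then obtain C0 where m: "M = Mu C0" "C = renn_c (Suc j) (Suc a) C0" by (auto simp: renn_inv)
  have "scons k D (Suc a) = D a" by (simp add: scons_def)
  then have eq: "ins (Suc j) (scons k D (Suc a)) (scons k D) = scons k (ins j (D a) D)"
    by (simp only: ins_scons)
  show ?case using Mu(1) Mu(3)[of "Suc j" "Suc a" C0] m eq by (auto intro!: typing_typing_c.Mu)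
qed (auto intro: typing_typing_c.intros)

lemma beta_exp:
  assumes wfG: "\<forall>x. isD (G x)" and wfD: "\<forall>a. isC (D a)"
    and ty: "typing G (substv 0 N M) t D"
  shows "typing G (App (Lam M) N) t D"
proof -
  obtain d0 where d0: "typing G N d0 D" "\<forall>d. leD d d0 \<longrightarrow> typing (ins 0 d G) M t D"
    using subst_lemma(1)[OF ty refl] by blast
  have "isD d0" using typing_wf(1)[OF d0(1) wfG wfD] .
  then have tm: "typing (scons d0 G) M t D" using d0(2) by (auto simp: ins0 intro: D_refl)
  have "isD t" using typing_wf(1)[OF ty wfG wfD] .
  then show ?thesis
  proof (rule arrow_closure)
    fix k r assume "isC k" "isR r" "leD t (Arr k r)"
    then have "leD t (Arr k r)" by simp
    with tm have "typing (scons d0 G) M (Arr k r) D" by (rule Sub)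
    then have "typing G (Lam M) (Arr (Prod d0 k) r) D" by (rule typing_typing_c.Abs[OF \<open>isD d0\<close>])
    then show "typing G (App (Lam M) N) (Arr k r) D" using d0(1) by (rule App)
  qed
qed

lemma mu_exp:
  shows "typing G P t D \<Longrightarrow> (\<forall>x. isD (G x)) \<Longrightarrow> (\<forall>a. isC (D a)) \<Longrightarrow>
     P = Mu (strsub_c 0 (liftn 0 N) C) \<Longrightarrow> typing G (App (Mu C) N) t D"
    and "typing_c G C' t D \<Longrightarrow> True"
proof (induct rule: typing_typing_c.inducts)
  case (Mu k G C' k' r D)
  have wf: "\<forall>a. isC (scons k D a)" using Mu(1,5) by (auto simp: scons_def)
  obtain d0 where d0: "typing G (liftn 0 N) d0 (scons k D)"
       "\<forall>e. leD e d0 \<longrightarrow> typing_c G C (if hdn C = 0 then theta e (Prod (Arr k' r) k') else Prod (Arr k' r) k')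
           ((scons k D)(0 := Prod e (scons k D 0)))"
    using strsub_lemma(2)[OF Mu(2) Mu(4) wf] Mu(6) by blast
  have N: "typing G N d0 D" using antiweak_n(1)[OF d0(1) refl] by (simp add: sh0_scons)
  have "isD d0" using typing_wf(1)[OF N Mu(4,5)] .
  then have "leD d0 d0" by (rule D_refl)
  have eq: "(scons k D)(0 := Prod d0 (scons k D 0)) = scons (Prod d0 k) D"
    by (auto simp: scons_def fun_eq_iff)
  note c = d0(2)[rule_format, OF \<open>leD d0 d0\<close>, unfolded eq]
  have ic: "isC (Prod d0 k)" using \<open>isD d0\<close> Mu(1) by simp
  have "typing G (Mu C) (Arr (Prod d0 k) r) D"
  proof (cases "hdn C = 0")
    case True
    then show ?thesis using c typing_typing_c.Mu[OF ic, of G C "Prod d0 k'" r D] by simp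
  next
    case False
    then show ?thesis using c typing_typing_c.Mu[OF ic, of G C k' r D] by simp
  qed
  then show ?case using N by (rule App)
next
  case (Sub G M s D t)
  then show ?case by (metis typing_typing_c.Sub)
qed (auto intro: typing_typing_c.And typing_typing_c.Omega)

definition EXP :: "trm \<Rightarrow> trm \<Rightarrow> 'a::complete_lattice itself \<Rightarrow> bool" where
  "EXP M M' (_ :: 'a itself) \<longleftrightarrow> (\<forall>(G :: nat \<Rightarrow> 'a ty) D t. (\<forall>x. isD (G x)) \<longrightarrow> (\<forall>a. isC (D a)) \<longrightarrow>
      typing G M' t D \<longrightarrow> typing G M t D)"

definition EXPC :: "cmd \<Rightarrow> cmd \<Rightarrow> 'a::complete_lattice itself \<Rightarrow> bool" where
  "EXPC C C' (_ :: 'a itself) \<longleftrightarrow> (\<forall>(G :: nat \<Rightarrow> 'a ty) D k' r. (\<forall>x. isD (G x)) \<longrightarrow> (\<forall>a. isC (D a)) \<longrightarrow>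
      typing_c G C' (Prod (Arr k' r) k') D \<longrightarrow> (\<exists>k''. typing_c G C (Prod (Arr k'' r) k'') D))"

lemma ctx_lemma:
  fixes G :: "nat \<Rightarrow> 'a::complete_lattice ty"
  shows "typing G P t D \<Longrightarrow> (\<forall>x. isD (G x)) \<Longrightarrow> (\<forall>a. isC (D a)) \<Longrightarrow>
   (\<forall>M M'. P = Lam M' \<longrightarrow> EXP M M' TYPE('a) \<longrightarrow> typing G (Lam M) t D) \<and>
   (\<forall>M M' N. P = App M' N \<longrightarrow> EXP M M' TYPE('a) \<longrightarrow> typing G (App M N) t D) \<and>
   (\<forall>M N N'. P = App M N' \<longrightarrow> EXP N N' TYPE('a) \<longrightarrow> typing G (App M N) t D) \<and>
   (\<forall>C0 C'. P = Mu C' \<longrightarrow> EXPC C0 C' TYPE('a) \<longrightarrow> typing G (Mu C0) t D)"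
  and "typing_c G C t D \<Longrightarrow> (\<forall>x. isD (G x)) \<Longrightarrow> (\<forall>a. isC (D a)) \<Longrightarrow>
   (\<forall>a M M'. C = Cmd a M' \<longrightarrow> EXP M M' TYPE('a) \<longrightarrow> typing_c G (Cmd a M) t D)"
proof (induct rule: typing_typing_c.inducts)
  case (Abs d G M' k r D)
  have wf: "\<forall>x. isD (scons d G x)" using Abs(1,4) by (auto simp: scons_def)
  show ?case
  proof (intro conjI allI impI)
    fix M M0 assume "Lam M' = Lam M0" "EXP M M0 TYPE('a)"
    then have "typing (scons d G) M (Arr k r) D" using Abs(2) wf Abs(5) by (auto simp: EXP_def)
    then show "typing G (Lam M) (Arr (Prod d k) r) D" using Abs(1) by (auto intro: typing_typing_c.Abs)
  qed auto
next
  case (App G M1 d k r D M2)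
  show ?case
  proof (intro conjI allI impI)
    fix M M' N assume "App M1 M2 = App M' N" "EXP M M' TYPE('a)"
    then have "typing G M (Arr (Prod d k) r) D" using App(1,5,6) by (auto simp: EXP_def)
    then show "typing G (App M N) (Arr k r) D" using App(3) \<open>App M1 M2 = App M' N\<close>
      by (auto intro: typing_typing_c.App)
  next
    fix M N N' assume "App M1 M2 = App M N'" "EXP N N' TYPE('a)"
    then have "typing G N d D" using App(3,5,6) by (auto simp: EXP_def)
    then show "typing G (App M N) (Arr k r) D" using App(1) \<open>App M1 M2 = App M N'\<close>
      by (auto intro: typing_typing_c.App)
  qed auto
next
  case (Cmd G M' d D b)
  show ?case
  proof (intro allI impI)
    fix a M M0 assume "Cmd b M' = Cmd a M0" "EXP M M0 TYPE('a)"
    then have "typing G M d D" using Cmd(1,3,4) by (auto simp: EXP_def)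
    then show "typing_c G (Cmd a M) (Prod d (D b)) D" using \<open>Cmd b M' = Cmd a M0\<close>
      by (auto intro: typing_typing_c.Cmd)
  qed
next
  case (Mu k G C k' r D)
  have wf: "\<forall>a. isC (scons k D a)" using Mu(1,5) by (auto simp: scons_def)
  show ?case
  proof (intro conjI allI impI)
    fix C0 C' assume "Mu C = Mu C'" "EXPC C0 C' TYPE('a)"
    then obtain k'' where "typing_c G C0 (Prod (Arr k'' r) k'') (scons k D)"
      using Mu(2) Mu(4) wf unfolding EXPC_def by blast
    then show "typing G (Mu C0) (Arr k r) D" using Mu(1) by (auto intro: typing_typing_c.Mu)
  qed auto
next
  case (And G M s D t)
  then show ?case by (auto intro: typing_typing_c.And)
next
  case (Sub G M s D t)
  note IH = Sub(2)[OF Sub(4,5)]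
  show ?case using IH Sub(3) by (blast intro: typing_typing_c.Sub)
next
  case (And_c G C s D t)
  then show ?case by (auto intro: typing_typing_c.And_c)
next
  case (Sub_c G C s D t)
  then show ?case by (auto intro: typing_typing_c.Sub_c)
qed (auto intro: typing_typing_c.Omega typing_typing_c.Omega_c)

lemma red_exp:
  shows "red M N \<Longrightarrow> EXP M N TYPE('a::complete_lattice)"
    and "red_c C C' \<Longrightarrow> EXPC C C' TYPE('a::complete_lattice)"
proof (induct rule: red_red_c.inducts)
  case (beta M N)
  show ?case unfolding EXP_def using beta_exp by blast
next
  case (mu C N)
  show ?case unfolding EXP_def using mu_exp(1)[OF _ _ _ refl] by blast
next
  case (ren a C)
  show ?case unfolding EXPC_def
  proof (intro allI impI)
    fix G :: "nat \<Rightarrow> 'a ty" and D k' r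
    assume wfG: "\<forall>x. isD (G x)" and wfD: "\<forall>a. isC (D a)"
      and ty: "typing_c G (renn_c 0 a C) (Prod (Arr k' r) k') D"
    have "typing_c G C (Prod (Arr k' r) k') (scons (D a) D)"
      using renn_lemma(2)[OF ty refl] by (simp add: ins0)
    then have "typing G (Mu C) (Arr (D a) r) D" using wfD by (intro Mu) auto
    then have "typing_c G (Cmd a (Mu C)) (Prod (Arr (D a) r) (D a)) D" by (rule Cmd)
    then show "\<exists>k''. typing_c G (Cmd a (Mu C)) (Prod (Arr k'' r) k'') D" by blast
  qed
next
  case (lam M M')
  show ?case unfolding EXP_def
  proof (intro allI impI)
    fix G :: "nat \<Rightarrow> 'a ty" and D t
    assume wfG: "\<forall>x. isD (G x)" and wfD: "\<forall>a. isC (D a)" and ty: "typing G (Lam M') t D"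
    note c = ctx_lemma(1)[OF ty wfG wfD]
    show "typing G (Lam M) t D" using conjunct1[OF c] lam(2) by blast
  qed
next
  case (appL M M' N)
  show ?case unfolding EXP_def
  proof (intro allI impI)
    fix G :: "nat \<Rightarrow> 'a ty" and D t
    assume wfG: "\<forall>x. isD (G x)" and wfD: "\<forall>a. isC (D a)" and ty: "typing G (App M' N) t D"
    note c = ctx_lemma(1)[OF ty wfG wfD]
    show "typing G (App M N) t D" using conjunct1[OF conjunct2[OF c]] appL(2) by blast
  qed
next
  case (appR N N' M)
  show ?case unfolding EXP_def
  proof (intro allI impI)
    fix G :: "nat \<Rightarrow> 'a ty" and D t
    assume wfG: "\<forall>x. isD (G x)" and wfD: "\<forall>a. isC (D a)" and ty: "typing G (App M N') t D"
    note c = ctx_lemma(1)[OF ty wfG wfD]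
    show "typing G (App M N) t D" using conjunct1[OF conjunct2[OF conjunct2[OF c]]] appR(2) by blast
  qed
next
  case (muC C C')
  show ?case unfolding EXP_def
  proof (intro allI impI)
    fix G :: "nat \<Rightarrow> 'a ty" and D t
    assume wfG: "\<forall>x. isD (G x)" and wfD: "\<forall>a. isC (D a)" and ty: "typing G (Mu C') t D"
    note c = ctx_lemma(1)[OF ty wfG wfD]
    show "typing G (Mu C) t D" using conjunct2[OF conjunct2[OF conjunct2[OF c]]] muC(2) by blast
  qed
next
  case (cmd M M' a)
  show ?case unfolding EXPC_def
  proof (intro allI impI)
    fix G :: "nat \<Rightarrow> 'a ty" and D k' r
    assume wfG: "\<forall>x. isD (G x)" and wfD: "\<forall>a. isC (D a)"
      and ty: "typing_c G (Cmd a M') (Prod (Arr k' r) k') D"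
    note c = ctx_lemma(2)[OF ty wfG wfD]
    have "typing_c G (Cmd a M) (Prod (Arr k' r) k') D" using c cmd(2) by blast
    then show "\<exists>k''. typing_c G (Cmd a M) (Prod (Arr k'' r) k'') D" by blast
  qed
qed

theorem theorem5p5:
  fixes G :: "nat \<Rightarrow> 'a::complete_lattice ty" and D :: "nat \<Rightarrow> 'a ty"
  assumes "omega_algebraic TYPE('a)"
    and "\<forall>x. isD (G x)" and "finite {x. G x \<noteq> Om}"
    and "\<forall>a. isC (D a)" and "finite {a. D a \<noteq> Om}"
    and "red M N"
    and "typing G N d D"
  shows "typing G M d D"
  using red_exp(1)[OF assms(6), where 'a='a] assms(2,4,7) unfolding EXP_def by blast

end
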